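(* Let $G$ be a finite abelian group of order $mn$, let $N \le G$ be a subgroup of order $n$, and let $D \subseteq G$ be a semiregular $(m,n,k,\lambda_1,\lambda_2)$-divisible difference set in $G$ relative to $N$. Let $\{\eta_j\}_{j=1}^m$ be an enumeration of the annihilator $N^\perp$, and let $\{\chi_i\}_{i=1}^n$ be a set of coset representatives of $\widehat{G}/N^\perp$. For each $1\le i\le n$ and $1 \le j \le m$ define the vector \[ e^i_j := \frac{1}{\sqrt{k}}\big((\chi_i\eta_j)(g)\big)_{g\in D}\in\mathbb{C}^k \] (coordinates indexed by the elements of $D$). Then for each $i$, $\{e^i_j\}_{j=1}^m$ is a set of $m$ flat orthonormal vectors in $\mathbb{C}^k$. Moreover, setting $\mathcal{W}_i=\operatorname{span}\{e^i_j\}_{j=1}^m$ for $1\le i\le n$, the collection $\{\mathcal{W}_i\}_{i=1}^n$ of $n$ subspaces of dimension $m$ is an equichordal tight fusion frame for $\mathbb{C}^k$ with fusion frame bound $nm/k$.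
   Context: $\widehat{G}$ denotes the group (under pointwise multiplication) of characters, i.e. homomorphisms $\chi:G\to\{z\in\mathbb{C}:|z|=1\}$; $\chi_0$ is the principal character (constantly $1$). For a subgroup $N\le G$, $N^\perp=\{\chi\in\widehat{G}:\chi(h)=1\text{ for all }h\in N\}$. A subset $D\subseteq G$ of size $k$ is an $(m,n,k,\lambda_1,\lambda_2)$-divisible difference set relative to $N$ (where $|G|=mn$, $|N|=n$) if the multiset $\{d-d': d,d'\in D, d\neq d'\}$ contains each element of $G\setminus N$ exactly $\lambda_2$ times and each element of $N\setminus\{0\}$ exactly $\lambda_1$ times; it is semiregular if moreover $k>\lambda_1$ and $k^2-\lambda_2 mn=0$. A vector is flat if all its coordinates have equal modulus. A collection of $m$-dimensional subspaces $\{\mathcal{W}_i\}_{i=1}^n$ of $\mathbb{F}^k$ with orthogonal projections $P_i$ is a tight fusion frame with bound $A$ if $\sum_{i=1}^n P_i=AI_k$. It is equichordal if, choosing for each $i$ a matrix $L_i$ whose columns are an orthonormal basis of $\mathcal{W}_i$, $\operatorname{trace}(L_i^*L_jL_j^*L_i)$ $(=\operatorname{trace}(P_iP_j))$ is the same for all $i\neq j$. *)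

theory Defs
  imports Complex_Main
begin

text \<open>The finite abelian group G is the (finite) carrier type 'g, written additively.\<close>

definition add_subgroup :: "'g::ab_group_add set \<Rightarrow> bool" where
  "add_subgroup N \<longleftrightarrow> 0 \<in> N \<and> (\<forall>a\<in>N. \<forall>b\<in>N. a - b \<in> N)"

definition is_char :: "('g::ab_group_add \<Rightarrow> complex) \<Rightarrow> bool" where
  "is_char \<chi> \<longleftrightarrow> (\<forall>a b. \<chi> (a + b) = \<chi> a * \<chi> b) \<and> (\<forall>a. cmod (\<chi> a) = 1)"

definition annihilator :: "'g::ab_group_add set \<Rightarrow> ('g \<Rightarrow> complex) set" where
  "annihilator N = {\<chi>. is_char \<chi> \<and> (\<forall>h\<in>N. \<chi> h = 1)}"

definition diff_count :: "'g::ab_group_add set \<Rightarrow> 'g \<Rightarrow> nat" where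
  "diff_count D g = card {(d, d'). d \<in> D \<and> d' \<in> D \<and> d \<noteq> d' \<and> d - d' = g}"

definition divisible_difference_set ::
  "nat \<Rightarrow> nat \<Rightarrow> nat \<Rightarrow> nat \<Rightarrow> nat \<Rightarrow> 'g::{ab_group_add,finite} set \<Rightarrow> 'g set \<Rightarrow> bool" where
  "divisible_difference_set m n k l1 l2 N D \<longleftrightarrow>
     card (UNIV :: 'g set) = m * n \<and> card N = n \<and> card D = k \<and>
     (\<forall>g. g \<notin> N \<longrightarrow> diff_count D g = l2) \<and>
     (\<forall>g\<in>N - {0}. diff_count D g = l1)"

definition semiregular_dds ::
  "nat \<Rightarrow> nat \<Rightarrow> nat \<Rightarrow> nat \<Rightarrow> nat \<Rightarrow> 'g::{ab_group_add,finite} set \<Rightarrow> 'g set \<Rightarrow> bool" where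
  "semiregular_dds m n k l1 l2 N D \<longleftrightarrow>
     divisible_difference_set m n k l1 l2 N D \<and> k > l1 \<and>
     int k ^ 2 - int l2 * int m * int n = 0"

text \<open>Vectors in C^k with coordinates indexed by the elements of D are modelled as
  functions 'g => complex vanishing outside D.\<close>

definition vecspace :: "'g set \<Rightarrow> ('g \<Rightarrow> complex) set" where
  "vecspace D = {v. \<forall>g. g \<notin> D \<longrightarrow> v g = 0}"

definition vinner :: "'g set \<Rightarrow> ('g \<Rightarrow> complex) \<Rightarrow> ('g \<Rightarrow> complex) \<Rightarrow> complex" where
  "vinner D u v = (\<Sum>g\<in>D. u g * cnj (v g))"

definition flat :: "'g set \<Rightarrow> ('g \<Rightarrow> complex) \<Rightarrow> bool" where
  "flat D v \<longleftrightarrow> (\<forall>g\<in>D. \<forall>h\<in>D. cmod (v g) = cmod (v h))"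

definition cspan :: "'g set \<Rightarrow> ('i \<Rightarrow> 'g \<Rightarrow> complex) \<Rightarrow> 'i set \<Rightarrow> ('g \<Rightarrow> complex) set" where
  "cspan D e J = {v. \<exists>c. v = (\<lambda>g. if g \<in> D then (\<Sum>j\<in>J. c j * e j g) else 0)}"

definition orth_proj :: "'g set \<Rightarrow> ('g \<Rightarrow> complex) set \<Rightarrow> ('g \<Rightarrow> complex) \<Rightarrow> ('g \<Rightarrow> complex)" where
  "orth_proj D W v = (THE p. p \<in> W \<and> (\<forall>w\<in>W. vinner D (\<lambda>g. v g - p g) w = 0))"

definition op_trace :: "'g set \<Rightarrow> (('g \<Rightarrow> complex) \<Rightarrow> ('g \<Rightarrow> complex)) \<Rightarrow> complex" where
  "op_trace D T = (\<Sum>g\<in>D. T (\<lambda>x. if x = g then 1 else 0) g)"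

definition tight_fusion_frame ::
  "'g set \<Rightarrow> ('i \<Rightarrow> ('g \<Rightarrow> complex) set) \<Rightarrow> 'i set \<Rightarrow> real \<Rightarrow> bool" where
  "tight_fusion_frame D W I A \<longleftrightarrow>
     (\<forall>v\<in>vecspace D. \<forall>g\<in>D. (\<Sum>i\<in>I. orth_proj D (W i) v g) = of_real A * v g)"

definition equichordal :: "'g set \<Rightarrow> ('i \<Rightarrow> ('g \<Rightarrow> complex) set) \<Rightarrow> 'i set \<Rightarrow> bool" where
  "equichordal D W I \<longleftrightarrow>
     (\<exists>c. \<forall>i\<in>I. \<forall>j\<in>I. i \<noteq> j \<longrightarrow> op_trace D (orth_proj D (W i) \<circ> orth_proj D (W j)) = c)"

definition evec :: "'g set \<Rightarrow> ('g \<Rightarrow> complex) \<Rightarrow> ('g \<Rightarrow> complex) \<Rightarrow> 'g \<Rightarrow> complex" where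
  "evec D \<chi> \<eta> = (\<lambda>g. if g \<in> D then (\<chi> g * \<eta> g) / complex_of_real (sqrt (real (card D))) else 0)"

end

theory Submission
  imports Defs
begin


lemma char_unit: "is_char \<chi> \<Longrightarrow> \<chi> a * cnj (\<chi> a) = 1"
  unfolding is_char_def by (metis complex_norm_square of_real_1 power_one)

lemma char_nz: "is_char \<chi> \<Longrightarrow> \<chi> a \<noteq> 0"
  using char_unit[of \<chi> a] by (metis mult_zero_left zero_neq_one)

lemma char_0: "is_char \<chi> \<Longrightarrow> \<chi> 0 = 1"
proof -
  assume c: "is_char \<chi>"
  have "\<chi> 0 = \<chi> 0 * \<chi> 0" using c unfolding is_char_def by (metis add_0)
  thus ?thesis using char_nz[OF c, of 0] by (metis mult_cancel_left1)
qed

lemma char_minus: "is_char \<chi> \<Longrightarrow> \<chi> (a - b) = \<chi> a * cnj (\<chi> b)"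
proof -
  assume c: "is_char \<chi>"
  have "\<chi> a = \<chi> (a - b) * \<chi> b" using c unfolding is_char_def by (metis diff_add_cancel)
  hence "\<chi> a * cnj (\<chi> b) = \<chi> (a - b) * (\<chi> b * cnj (\<chi> b))" by simp
  thus ?thesis using char_unit[OF c] by simp
qed

lemma char_mult: "is_char \<alpha> \<Longrightarrow> is_char \<beta> \<Longrightarrow> is_char (\<lambda>g. \<alpha> g * \<beta> g)"
  unfolding is_char_def by (simp add: norm_mult)

lemma char_cnj: "is_char \<alpha> \<Longrightarrow> is_char (\<lambda>g. cnj (\<alpha> g))"
  unfolding is_char_def by simp

lemma char_one: "is_char (\<lambda>g. 1)"
  unfolding is_char_def by simp

lemma char_sum_UNIV:
  assumes c: "is_char (\<chi>::'g::{ab_group_add,finite} \<Rightarrow> complex)" and x: "\<chi> x \<noteq> 1"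
  shows "(\<Sum>g\<in>UNIV. \<chi> g) = 0"
proof -
  have "(\<Sum>g\<in>UNIV. \<chi> g) = (\<Sum>g\<in>UNIV. \<chi> (g + x))"
    by (rule sum.reindex_bij_witness[where j="\<lambda>g. g - x" and i="\<lambda>g. g + x"]) auto
  also have "\<dots> = \<chi> x * (\<Sum>g\<in>UNIV. \<chi> g)"
    using c unfolding is_char_def by (simp add: sum_distrib_left mult.commute)
  finally have "(1 - \<chi> x) * (\<Sum>g\<in>UNIV. \<chi> g) = 0" by (simp add: algebra_simps)
  thus ?thesis using x by simp
qed

lemma sub_add: "add_subgroup N \<Longrightarrow> a \<in> N \<Longrightarrow> b \<in> N \<Longrightarrow> a + b \<in> N"
  unfolding add_subgroup_def by (metis diff_0 diff_minus_eq_add)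

lemma sub_diff: "add_subgroup N \<Longrightarrow> a \<in> N \<Longrightarrow> b \<in> N \<Longrightarrow> a - b \<in> N"
  unfolding add_subgroup_def by blast

lemma char_sum_sub:
  assumes N: "add_subgroup N" and c: "is_char (\<chi>::'g::{ab_group_add,finite} \<Rightarrow> complex)"
    and x: "x \<in> N" "\<chi> x \<noteq> 1"
  shows "(\<Sum>g\<in>N. \<chi> g) = 0"
proof -
  have "(\<Sum>g\<in>N. \<chi> g) = (\<Sum>g\<in>N. \<chi> (g + x))"
    by (rule sum.reindex_bij_witness[where j="\<lambda>g. g - x" and i="\<lambda>g. g + x"])
       (auto simp: sub_add[OF N] sub_diff[OF N] x)
  also have "\<dots> = \<chi> x * (\<Sum>g\<in>N. \<chi> g)"
    using c unfolding is_char_def by (simp add: sum_distrib_left mult.commute)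
  finally have "(1 - \<chi> x) * (\<Sum>g\<in>N. \<chi> g) = 0" by (simp add: algebra_simps)
  thus ?thesis using x by simp
qed

lemma dds_sum:
  fixes D N :: "'g::{ab_group_add,finite} set"
  assumes dds: "divisible_difference_set m n k l1 l2 N D" and N: "add_subgroup N"
    and c: "is_char \<theta>"
  shows "(\<Sum>d\<in>D. \<theta> d) * cnj (\<Sum>d\<in>D. \<theta> d) =
     of_nat k + of_nat l1 * (\<Sum>g\<in>N-{0}. \<theta> g) + of_nat l2 * (\<Sum>g\<in>-N. \<theta> g)"
proof -
  define cnt where "cnt g = card {p \<in> D \<times> D. fst p - snd p = g}" for g
  have kD: "card D = k" and l2: "\<And>g. g \<notin> N \<Longrightarrow> diff_count D g = l2"
    and l1: "\<And>g. g \<in> N - {0} \<Longrightarrow> diff_count D g = l1"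
    using dds unfolding divisible_difference_set_def by auto
  have c0: "cnt 0 = k"
  proof -
    have "{p \<in> D \<times> D. fst p - snd p = 0} = (\<lambda>d. (d,d)) ` D" by auto
    moreover have "inj_on (\<lambda>d. (d,d)) D" by (auto simp: inj_on_def)
    ultimately show ?thesis unfolding cnt_def using kD by (simp add: card_image)
  qed
  have cg: "cnt g = diff_count D g" if "g \<noteq> 0" for g
  proof -
    have "{p \<in> D \<times> D. fst p - snd p = g} = {(d, d'). d \<in> D \<and> d' \<in> D \<and> d \<noteq> d' \<and> d - d' = g}"
      using that by auto
    thus ?thesis unfolding cnt_def diff_count_def by simp
  qed
  have "(\<Sum>d\<in>D. \<theta> d) * cnj (\<Sum>d\<in>D. \<theta> d) = (\<Sum>d\<in>D. \<Sum>d'\<in>D. \<theta> (d - d'))"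
    by (simp add: sum_distrib_left sum_distrib_right char_minus[OF c]) (rule sum.swap)
  also have "\<dots> = (\<Sum>p\<in>D \<times> D. \<theta> (fst p - snd p))"
    by (simp add: sum.cartesian_product case_prod_beta)
  also have "\<dots> = (\<Sum>g\<in>UNIV. \<Sum>p\<in>{p \<in> D \<times> D. fst p - snd p = g}. \<theta> (fst p - snd p))"
    by (rule sum.group[symmetric]) auto
  also have "\<dots> = (\<Sum>g\<in>UNIV. \<theta> g * of_nat (cnt g))"
    unfolding cnt_def by (rule sum.cong) auto
  also have "\<dots> = (\<Sum>g\<in>N. \<theta> g * of_nat (cnt g)) + (\<Sum>g\<in>-N. \<theta> g * of_nat (cnt g))"
    by (subst sum.union_disjoint[symmetric]) (auto intro: sum.cong)
  also have "(\<Sum>g\<in>N. \<theta> g * of_nat (cnt g)) = \<theta> 0 * of_nat (cnt 0) + (\<Sum>g\<in>N-{0}. \<theta> g * of_nat (cnt g))"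
    using N unfolding add_subgroup_def by (meson finite sum.remove)
  also have "(\<Sum>g\<in>N-{0}. \<theta> g * of_nat (cnt g)) = of_nat l1 * (\<Sum>g\<in>N-{0}. \<theta> g)"
    by (simp add: sum_distrib_left cg l1 mult.commute)
  also have "(\<Sum>g\<in>-N. \<theta> g * of_nat (cnt g)) = of_nat l2 * (\<Sum>g\<in>-N. \<theta> g)"
  proof -
    have "\<And>g. g \<in> -N \<Longrightarrow> cnt g = l2"
    proof -
      fix g assume "g \<in> -N"
      hence "g \<notin> N" "g \<noteq> 0" using N unfolding add_subgroup_def by auto
      thus "cnt g = l2" using cg l2 by simp
    qed
    thus ?thesis by (simp add: sum_distrib_left mult.commute)
  qed
  finally show ?thesis by (simp add: c0 char_0[OF c])
qed

lemma sum_compl: "(\<Sum>g\<in>-N. f g) = (\<Sum>g\<in>UNIV. f g) - (\<Sum>g\<in>(N::'g::finite set). (f g :: complex))"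
  by (simp add: Compl_eq_Diff_UNIV sum_diff)

lemma sum_remove0: "add_subgroup N \<Longrightarrow> (\<Sum>g\<in>N-{0}. f g) = (\<Sum>g\<in>(N::'g::{ab_group_add,finite} set). (f g :: complex)) - f 0"
  unfolding add_subgroup_def by (simp add: sum_diff1)

lemma dds_count:
  fixes D N :: "'g::{ab_group_add,finite} set"
  assumes sr: "semiregular_dds m n k l1 l2 N D" and N: "add_subgroup N"
  shows "of_nat k + of_nat l1 * (of_nat n - 1) - of_nat l2 * of_nat n = (0::complex)"
proof -
  have dds: "divisible_difference_set m n k l1 l2 N D" and sq: "int k ^ 2 - int l2 * int m * int n = 0"
    using sr unfolding semiregular_dds_def by auto
  have cU: "card (UNIV::'g set) = m * n" and cN: "card N = n" and kD: "card D = k"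
    using dds unfolding divisible_difference_set_def by auto
  have sq': "(of_nat k::complex) * of_nat k = of_nat l2 * of_nat m * of_nat n"
  proof -
    have "k * k = l2 * m * n" using sq by (simp add: power2_eq_square) (metis of_nat_eq_iff of_nat_mult)
    thus ?thesis by (metis of_nat_mult)
  qed
  have H: "(\<Sum>d\<in>D. (\<lambda>g. 1::complex) d) * cnj (\<Sum>d\<in>D. (\<lambda>g. 1::complex) d) =
     of_nat k + of_nat l1 * (\<Sum>g\<in>N-{0}. (\<lambda>g. 1::complex) g) + of_nat l2 * (\<Sum>g\<in>-N. (\<lambda>g. 1::complex) g)"
    by (rule dds_sum[OF dds N char_one])
  have "of_nat k * of_nat k = of_nat k + of_nat l1 * (of_nat n - 1) + of_nat l2 * (of_nat m * of_nat n - (of_nat n::complex))"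
  proof -
    have z: "0 \<in> N" using N unfolding add_subgroup_def by auto
    have a: "(of_nat (card (N - {0}))::complex) = of_nat n - 1"
    proof -
      have "card N \<ge> 1" using z by (metis One_nat_def Suc_leI card_gt_0_iff empty_iff finite)
      moreover have "card (N - {0}) = card N - 1" using z by (simp add: card_Diff_singleton)
      ultimately show ?thesis using cN by (simp add: of_nat_diff)
    qed
    have b: "(of_nat (card (- N))::complex) = of_nat m * of_nat n - of_nat n"
    proof -
      have "card (-N) = card (UNIV::'g set) - card N" by (simp add: Compl_eq_Diff_UNIV card_Diff_subset)
      moreover have "card N \<le> card (UNIV::'g set)" by (simp add: card_mono)
      ultimately show ?thesis using cU cN by (simp add: of_nat_diff)
    qed
    show ?thesis using H a b by (simp add: kD)
  qed
  thus ?thesis using sq' by (simp add: algebra_simps)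
qed

lemma dds_annih_zero:
  fixes D N :: "'g::{ab_group_add,finite} set"
  assumes sr: "semiregular_dds m n k l1 l2 N D" and N: "add_subgroup N"
    and c: "is_char \<theta>" and triv: "\<forall>h\<in>N. \<theta> h = 1" and x: "\<theta> x \<noteq> 1"
  shows "(\<Sum>d\<in>D. \<theta> d) = 0"
proof -
  have dds: "divisible_difference_set m n k l1 l2 N D"
    using sr unfolding semiregular_dds_def by auto
  have cN: "card N = n" using dds unfolding divisible_difference_set_def by auto
  have sN: "(\<Sum>g\<in>N. \<theta> g) = of_nat n" using triv cN by simp
  have "(\<Sum>d\<in>D. \<theta> d) * cnj (\<Sum>d\<in>D. \<theta> d) =
     of_nat k + of_nat l1 * (\<Sum>g\<in>N-{0}. \<theta> g) + of_nat l2 * (\<Sum>g\<in>-N. \<theta> g)"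
    by (rule dds_sum[OF dds N c])
  also have "\<dots> = of_nat k + of_nat l1 * (of_nat n - 1) - of_nat l2 * of_nat n"
    by (simp add: sum_remove0[OF N] sum_compl sN char_0[OF c] char_sum_UNIV[OF c x])
  also have "\<dots> = 0" by (rule dds_count[OF sr N])
  finally show ?thesis by (metis complex_cnj_zero_iff mult_eq_0_iff)
qed

lemma dds_nonannih:
  fixes D N :: "'g::{ab_group_add,finite} set"
  assumes sr: "semiregular_dds m n k l1 l2 N D" and N: "add_subgroup N"
    and c: "is_char \<theta>" and h: "h \<in> N" "\<theta> h \<noteq> 1"
  shows "(\<Sum>d\<in>D. \<theta> d) * cnj (\<Sum>d\<in>D. \<theta> d) = of_nat k - of_nat l1"
proof -
  have dds: "divisible_difference_set m n k l1 l2 N D"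
    using sr unfolding semiregular_dds_def by auto
  have "(\<Sum>d\<in>D. \<theta> d) * cnj (\<Sum>d\<in>D. \<theta> d) =
     of_nat k + of_nat l1 * (\<Sum>g\<in>N-{0}. \<theta> g) + of_nat l2 * (\<Sum>g\<in>-N. \<theta> g)"
    by (rule dds_sum[OF dds N c])
  also have "\<dots> = of_nat k - of_nat l1"
    by (simp add: sum_remove0[OF N] sum_compl char_sum_sub[OF N c h] char_0[OF c] char_sum_UNIV[OF c h(2)])
  finally show ?thesis .
qed

lemma char_shift:
  assumes fin: "finite C" and C: "C = {\<psi>::'g::{ab_group_add,finite} \<Rightarrow> complex. is_char \<psi>}" and \<phi>: "\<phi> \<in> C"
  shows "(\<Sum>\<psi>\<in>C. \<phi> x * \<psi> x) = (\<Sum>\<psi>\<in>C. \<psi> x)"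
proof -
  have c: "is_char \<phi>" using \<phi> C by simp
  have "(\<Sum>\<psi>\<in>C. \<psi> x) = (\<Sum>\<psi>\<in>C. (\<lambda>g. \<phi> g * \<psi> g) x)"
  proof (rule sum.reindex_bij_witness[where j="\<lambda>\<psi> g. cnj (\<phi> g) * \<psi> g" and i="\<lambda>\<psi> g. \<phi> g * \<psi> g"])
    fix a assume "a \<in> C"
    thus "(\<lambda>g. cnj (\<phi> g) * (\<phi> g * a g)) = a" using char_unit[OF c]
      by (simp add: mult.assoc[symmetric] mult.commute)
    show "(\<lambda>g. \<phi> g * a g) \<in> C" using \<open>a \<in> C\<close> C c by (simp add: char_mult)
  next
    fix a assume "a \<in> C"
    thus "(\<lambda>g. \<phi> g * (cnj (\<phi> g) * a g)) = a" using char_unit[OF c]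
      by (simp add: mult.assoc[symmetric])
    show "(\<lambda>g. cnj (\<phi> g) * a g) \<in> C" using \<open>a \<in> C\<close> C c by (simp add: char_mult char_cnj)
  qed (simp add: char_unit[OF c])
  thus ?thesis by simp
qed

lemma char_dual_orth:
  assumes fin: "finite C" and C: "C = {\<psi>::'g::{ab_group_add,finite} \<Rightarrow> complex. is_char \<psi>}"
    and card: "card C = card (UNIV::'g set)"
  shows "(\<Sum>\<psi>\<in>C. \<psi> x) = (if x = 0 then of_nat (card (UNIV::'g set)) else 0)"
proof -
  define H where "H = {x. \<forall>\<phi>\<in>C. \<phi> x = 1}"
  have S: "(\<Sum>\<psi>\<in>C. \<psi> y) = (if y \<in> H then of_nat (card C) else 0)" for y
  proof (cases "y \<in> H")
    case True hence "(\<Sum>\<psi>\<in>C. \<psi> y) = (\<Sum>\<psi>\<in>C. 1)" unfolding H_def by (intro sum.cong) auto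
    thus ?thesis using True by simp
  next
    case False
    then obtain \<phi> where \<phi>: "\<phi> \<in> C" "\<phi> y \<noteq> 1" unfolding H_def by auto
    have "(\<Sum>\<psi>\<in>C. \<phi> y * \<psi> y) = (\<Sum>\<psi>\<in>C. \<psi> y)" by (rule char_shift[OF fin C \<phi>(1)])
    hence "\<phi> y * (\<Sum>\<psi>\<in>C. \<psi> y) = (\<Sum>\<psi>\<in>C. \<psi> y)" by (simp add: sum_distrib_left)
    hence "(1 - \<phi> y) * (\<Sum>\<psi>\<in>C. \<psi> y) = 0" by (simp add: algebra_simps)
    thus ?thesis using False \<phi>(2) by simp
  qed
  have one: "(\<lambda>g. 1) \<in> C" using C char_one by simp
  have "(\<Sum>y\<in>UNIV. \<Sum>\<psi>\<in>C. \<psi> y) = (\<Sum>\<psi>\<in>C. \<Sum>y\<in>UNIV. \<psi> y)" by (rule sum.swap)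
  also have "\<dots> = (\<Sum>\<psi>\<in>C. if \<psi> = (\<lambda>g. 1) then of_nat (card (UNIV::'g set)) else 0)"
  proof (rule sum.cong)
    fix \<psi> assume p: "\<psi> \<in> C"
    show "(\<Sum>y\<in>UNIV. \<psi> y) = (if \<psi> = (\<lambda>g. 1) then of_nat (card (UNIV::'g set)) else 0)"
    proof (cases "\<psi> = (\<lambda>g. 1)")
      case False
      then obtain y where "\<psi> y \<noteq> 1" by auto
      thus ?thesis using char_sum_UNIV[of \<psi> y] p C False by simp
    qed simp
  qed simp
  also have "\<dots> = of_nat (card (UNIV::'g set))" using one fin by (simp add: sum.delta')
  finally have A: "(\<Sum>y\<in>UNIV. \<Sum>\<psi>\<in>C. \<psi> y) = of_nat (card (UNIV::'g set))" .
  have "(\<Sum>y\<in>UNIV. \<Sum>\<psi>\<in>C. \<psi> y) = (\<Sum>y\<in>UNIV. if y \<in> H then of_nat (card C) else 0)"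
    using S by simp
  also have "\<dots> = of_nat (card H) * of_nat (card C)"
    by (simp add: sum.If_cases Int_absorb1)
  finally have "of_nat (card H) * of_nat (card (UNIV::'g set)) = (of_nat (card (UNIV::'g set)) :: complex)"
    using A card by simp
  moreover have "card (UNIV::'g set) \<noteq> 0" by simp
  ultimately have "card H = 1" by (metis mult_cancel_right2 of_nat_eq_0_iff of_nat_eq_1_iff)
  moreover have "0 \<in> H" unfolding H_def using C char_0 by auto
  ultimately have "H = {0}" by (metis card_1_singletonE singletonD)
  thus ?thesis using S card by simp
qed

definition ON :: "'g set \<Rightarrow> ('j \<Rightarrow> 'g \<Rightarrow> complex) \<Rightarrow> 'j set \<Rightarrow> bool" where
  "ON D u J \<longleftrightarrow> (\<forall>j\<in>J. u j \<in> vecspace D) \<and>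
     (\<forall>j\<in>J. \<forall>j'\<in>J. vinner D (u j) (u j') = (if j = j' then 1 else 0))"

lemma vinner_diff: "vinner D (\<lambda>g. a g - b g) w = vinner D a w - vinner D b w"
  unfolding vinner_def by (simp add: algebra_simps sum_subtractf)

lemma vinner_lin: "finite J \<Longrightarrow> vinner D (\<lambda>g. \<Sum>l\<in>J. c l * u l g) w = (\<Sum>l\<in>J. c l * vinner D (u l) w)"
  unfolding vinner_def by (simp add: sum_distrib_left sum_distrib_right mult.assoc) (rule sum.swap)

lemma vinner_span:
  assumes "finite J"
  shows "vinner D x (\<lambda>g. if g \<in> D then (\<Sum>j\<in>J. c j * u j g) else 0) = (\<Sum>j\<in>J. cnj (c j) * vinner D x (u j))"
proof -
  have "vinner D x (\<lambda>g. if g \<in> D then (\<Sum>j\<in>J. c j * u j g) else 0) = (\<Sum>g\<in>D. x g * cnj (\<Sum>j\<in>J. c j * u j g))"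
    unfolding vinner_def by (rule sum.cong) auto
  also have "\<dots> = (\<Sum>j\<in>J. cnj (c j) * vinner D x (u j))"
    unfolding vinner_def by (simp add: sum_distrib_left sum_distrib_right mult.assoc mult.left_commute) (rule sum.swap)
  finally show ?thesis .
qed

lemma vinner_self_zero:
  assumes "finite D" "vinner D d d = 0" "g \<in> D"
  shows "d g = 0"
proof -
  have "vinner D d d = complex_of_real (\<Sum>g\<in>D. (cmod (d g))\<^sup>2)"
    unfolding vinner_def of_real_sum complex_norm_square by simp
  hence "(\<Sum>g\<in>D. (cmod (d g))\<^sup>2) = 0" using assms(2) of_real_eq_0_iff by metis
  hence "(cmod (d g))\<^sup>2 = 0" using assms(1,3) by (subst (asm) sum_nonneg_eq_0_iff) auto
  thus ?thesis by simp
qed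

lemma proj_eq:
  assumes D: "finite D" and J: "finite J" and on: "ON D u J"
  shows "orth_proj D (cspan D u J) v = (\<lambda>x. \<Sum>j\<in>J. vinner D v (u j) * u j x)"
proof -
  define p where "p = (\<lambda>x. \<Sum>j\<in>J. vinner D v (u j) * u j x)"
  have vs: "\<And>j g. j \<in> J \<Longrightarrow> g \<notin> D \<Longrightarrow> u j g = 0" using on unfolding ON_def vecspace_def by auto
  have orth: "\<And>j j'. j \<in> J \<Longrightarrow> j' \<in> J \<Longrightarrow> vinner D (u j) (u j') = (if j = j' then 1 else 0)"
    using on unfolding ON_def by auto
  have pform: "p = (\<lambda>g. if g \<in> D then (\<Sum>j\<in>J. vinner D v (u j) * u j g) else 0)"
    unfolding p_def using vs by (auto intro!: ext sum.neutral)
  have pin: "p \<in> cspan D u J" unfolding cspan_def mem_Collect_eq by (rule exI, rule pform)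
  have porth_u: "vinner D (\<lambda>g. v g - p g) (u j) = 0" if "j \<in> J" for j
  proof -
    have "vinner D p (u j) = (\<Sum>l\<in>J. vinner D v (u l) * vinner D (u l) (u j))"
      unfolding p_def by (rule vinner_lin[OF J])
    also have "\<dots> = (\<Sum>l\<in>J. if l = j then vinner D v (u j) else 0)"
      by (rule sum.cong) (auto simp: orth that)
    also have "\<dots> = vinner D v (u j)" using J that by simp
    finally show ?thesis by (simp add: vinner_diff)
  qed
  have porth: "vinner D (\<lambda>g. v g - p g) w = 0" if wW: "w \<in> cspan D u J" for w
  proof -
    obtain c where w: "w = (\<lambda>g. if g \<in> D then (\<Sum>j\<in>J. c j * u j g) else 0)"
      using wW unfolding cspan_def by blast
    show ?thesis unfolding w vinner_span[OF J] using porth_u by simp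
  qed
  show ?thesis unfolding orth_proj_def p_def[symmetric]
  proof (rule the_equality)
    show "p \<in> cspan D u J \<and> (\<forall>w\<in>cspan D u J. vinner D (\<lambda>g. v g - p g) w = 0)"
      using pin porth by blast
  next
    fix q assume q: "q \<in> cspan D u J \<and> (\<forall>w\<in>cspan D u J. vinner D (\<lambda>g. v g - q g) w = 0)"
    then obtain c' where qf: "q = (\<lambda>g. if g \<in> D then (\<Sum>j\<in>J. c' j * u j g) else 0)"
      unfolding cspan_def by blast
    define d where "d = (\<lambda>g. p g - q g)"
    have dform: "d = (\<lambda>g. if g \<in> D then (\<Sum>j\<in>J. (vinner D v (u j) - c' j) * u j g) else 0)"
      unfolding d_def qf by (subst pform) (auto simp: algebra_simps sum_subtractf)
    hence din: "d \<in> cspan D u J" unfolding cspan_def mem_Collect_eq by (intro exI)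
    have "vinner D (\<lambda>g. v g - q g) d - vinner D (\<lambda>g. v g - p g) d = 0"
      using q din porth by simp
    hence "vinner D d d = 0" unfolding d_def vinner_diff[symmetric] by (simp add: algebra_simps)
    hence "\<And>g. g \<in> D \<Longrightarrow> d g = 0" using vinner_self_zero[OF D] by blast
    moreover have "\<And>g. g \<notin> D \<Longrightarrow> d g = 0" using dform by simp
    ultimately show "q = p" unfolding d_def by (metis eq_iff_diff_eq_0 ext)
  qed
qed

lemma vinner_cnj: "vinner D a b = cnj (vinner D b a)"
  unfolding vinner_def by (simp add: mult.commute)

lemma trace_formula:
  assumes D: "finite D" and J: "finite J" and L: "finite L" and u: "ON D u J" and w: "ON D w L"
  shows "op_trace D (orth_proj D (cspan D u J) \<circ> orth_proj D (cspan D w L)) =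
    (\<Sum>j\<in>J. \<Sum>l\<in>L. vinner D (w l) (u j) * cnj (vinner D (w l) (u j)))"
proof -
  have dl: "vinner D (\<lambda>x. if x = g then 1 else 0) (w l) = cnj (w l g)" if "g \<in> D" for g l
  proof -
    have "vinner D (\<lambda>x. if x = g then 1 else 0) (w l) = (\<Sum>h\<in>D. if h = g then cnj (w l h) else 0)"
      unfolding vinner_def by (rule sum.cong) auto
    thus ?thesis using D that by simp
  qed
  have "op_trace D (orth_proj D (cspan D u J) \<circ> orth_proj D (cspan D w L)) =
     (\<Sum>g\<in>D. \<Sum>j\<in>J. (\<Sum>l\<in>L. cnj (w l g) * vinner D (w l) (u j)) * u j g)"
  proof -
    have "(orth_proj D (cspan D u J) \<circ> orth_proj D (cspan D w L)) (\<lambda>x. if x = g then 1 else 0) g =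
      (\<Sum>j\<in>J. (\<Sum>l\<in>L. cnj (w l g) * vinner D (w l) (u j)) * u j g)" if "g \<in> D" for g
      unfolding comp_def proj_eq[OF D J u] proj_eq[OF D L w] vinner_lin[OF L] using dl[OF that] by simp
    thus ?thesis unfolding op_trace_def by (rule sum.cong[OF refl])
  qed
  also have "\<dots> = (\<Sum>j\<in>J. \<Sum>l\<in>L. vinner D (w l) (u j) * (\<Sum>g\<in>D. u j g * cnj (w l g)))"
    by (simp add: sum_distrib_left sum_distrib_right mult.commute mult.left_commute)
       (subst sum.swap, rule sum.cong[OF refl], subst sum.swap, rule refl)
  also have "\<dots> = (\<Sum>j\<in>J. \<Sum>l\<in>L. vinner D (w l) (u j) * cnj (vinner D (w l) (u j)))"
    using vinner_cnj[of D "u j" "w l" for j l] unfolding vinner_def by simp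
  finally show ?thesis .
qed

lemma sqrt_sq_c: "complex_of_real (sqrt (real c)) * complex_of_real (sqrt (real c)) = of_nat c"
  by (simp flip: of_real_mult)

lemma evec_inner:
  "vinner D (evec D a1 a2) (evec D b1 b2) = (\<Sum>g\<in>D. a1 g * a2 g * cnj (b1 g * b2 g)) / of_nat (card D)"
proof -
  let ?s = "complex_of_real (sqrt (real (card D)))"
  have "vinner D (evec D a1 a2) (evec D b1 b2) = (\<Sum>g\<in>D. a1 g * a2 g * cnj (b1 g * b2 g) / (?s * ?s))"
    unfolding vinner_def evec_def by (rule sum.cong) (auto simp: field_simps)
  thus ?thesis by (simp add: sqrt_sq_c sum_divide_distrib)
qed

lemma evec_proj_term:
  assumes "g \<in> D"
  shows "vinner D v (evec D a1 a2) * evec D a1 a2 g = (\<Sum>h\<in>D. v h * cnj (a1 h * a2 h) * (a1 g * a2 g)) / of_nat (card D)"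
proof -
  let ?s = "complex_of_real (sqrt (real (card D)))"
  have "vinner D v (evec D a1 a2) * evec D a1 a2 g = (\<Sum>h\<in>D. v h * cnj (a1 h * a2 h) / ?s) * (a1 g * a2 g / ?s)"
    unfolding vinner_def evec_def using assms by (auto intro!: sum.cong)
  also have "\<dots> = (\<Sum>h\<in>D. v h * cnj (a1 h * a2 h) * (a1 g * a2 g)) / (?s * ?s)"
    by (simp only: sum_divide_distrib[symmetric] sum_distrib_right[symmetric] times_divide_times_eq)
  finally show ?thesis by (simp add: sqrt_sq_c)
qed

lemma char_eq_iff: "is_char a \<Longrightarrow> is_char b \<Longrightarrow> (\<forall>g. a g * cnj (b g) = 1) \<longleftrightarrow> a = b"
proof
  assume a: "is_char a" and b: "is_char b" and h: "\<forall>g. a g * cnj (b g) = 1"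
  show "a = b"
  proof
    fix g
    have "a g * (cnj (b g) * b g) = b g" using h by (metis mult.assoc mult_1)
    thus "a g = b g" using char_unit[OF b, of g] by (simp add: mult.commute)
  qed
qed (simp add: char_unit)

lemma annih_char: "\<theta> \<in> annihilator N \<Longrightarrow> is_char \<theta>"
  unfolding annihilator_def by simp

lemma char_param:
  fixes N :: "'g::{ab_group_add,finite} set" and \<eta> \<chi> :: "nat \<Rightarrow> 'g \<Rightarrow> complex"
  assumes \<eta>: "bij_betw \<eta> {1..m} (annihilator N)" and \<chi>: "\<forall>i\<in>{1..n}. is_char (\<chi> i)"
    and u: "\<forall>\<psi>. is_char \<psi> \<longrightarrow>
           (\<exists>!i. i \<in> {1..n} \<and> (\<exists>\<theta>\<in>annihilator N. \<psi> = (\<lambda>g. \<chi> i g * \<theta> g)))"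
  shows "bij_betw (\<lambda>(i,j). \<lambda>g. \<chi> i g * \<eta> j g) ({1..n}\<times>{1..m}) {\<psi>. is_char \<psi>}"
  unfolding bij_betw_def
proof (intro conjI)
  have \<eta>c: "\<And>j. j \<in> {1..m} \<Longrightarrow> \<eta> j \<in> annihilator N" using \<eta> unfolding bij_betw_def by auto
  show "inj_on (\<lambda>(i,j). \<lambda>g. \<chi> i g * \<eta> j g) ({1..n}\<times>{1..m})"
  proof (rule inj_onI, clarify)
    fix i j i' j' assume i: "i \<in> {1..n}" "i' \<in> {1..n}" and j: "j \<in> {1..m}" "j' \<in> {1..m}"
      and eq: "(\<lambda>g. \<chi> i g * \<eta> j g) = (\<lambda>g. \<chi> i' g * \<eta> j' g)"
    have ci: "is_char (\<lambda>g. \<chi> i g * \<eta> j g)" using \<chi> i \<eta>c[OF j(1)] by (simp add: char_mult annih_char)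
    have "i = i'" using u[rule_format, OF ci] i \<eta>c j eq by blast
    moreover have "\<eta> j = \<eta> j'"
    proof
      fix g
      have "\<chi> i g * \<eta> j g = \<chi> i g * \<eta> j' g" using eq \<open>i = i'\<close> by metis
      thus "\<eta> j g = \<eta> j' g" using char_nz[of "\<chi> i" g] \<chi> i by simp
    qed
    hence "j = j'" using \<eta> j unfolding bij_betw_def inj_on_def by blast
    ultimately show "i = i' \<and> j = j'" by simp
  qed
  show "(\<lambda>(i,j). \<lambda>g. \<chi> i g * \<eta> j g) ` ({1..n}\<times>{1..m}) = {\<psi>. is_char \<psi>}"
  proof
    show "(\<lambda>(i,j). \<lambda>g. \<chi> i g * \<eta> j g) ` ({1..n}\<times>{1..m}) \<subseteq> {\<psi>. is_char \<psi>}"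
    proof (clarify)
      fix a b assume "a \<in> {1..n}" "b \<in> {1..m}"
      thus "is_char (\<lambda>g. \<chi> a g * \<eta> b g)" using \<chi> \<eta>c by (metis char_mult annih_char)
    qed
    show "{\<psi>. is_char \<psi>} \<subseteq> (\<lambda>(i,j). \<lambda>g. \<chi> i g * \<eta> j g) ` ({1..n}\<times>{1..m})"
    proof
      fix \<psi> :: "'g \<Rightarrow> complex" assume "\<psi> \<in> {\<psi>. is_char \<psi>}"
      then obtain i \<theta> where i: "i \<in> {1..n}" and th: "\<theta> \<in> annihilator N" and p: "\<psi> = (\<lambda>g. \<chi> i g * \<theta> g)"
        using u by blast
      have "\<theta> \<in> \<eta> ` {1..m}" using \<eta> th unfolding bij_betw_def by simp
      then obtain j where "j \<in> {1..m}" "\<theta> = \<eta> j" by blast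
      thus "\<psi> \<in> (\<lambda>(i,j). \<lambda>g. \<chi> i g * \<eta> j g) ` ({1..n}\<times>{1..m})" using i p by force
    qed
  qed
qed

lemma dual_sum:
  fixes N :: "'g::{ab_group_add,finite} set" and \<eta> \<chi> :: "nat \<Rightarrow> 'g \<Rightarrow> complex"
  assumes \<eta>: "bij_betw \<eta> {1..m} (annihilator N)" and \<chi>: "\<forall>i\<in>{1..n}. is_char (\<chi> i)"
    and u: "\<forall>\<psi>. is_char \<psi> \<longrightarrow>
           (\<exists>!i. i \<in> {1..n} \<and> (\<exists>\<theta>\<in>annihilator N. \<psi> = (\<lambda>g. \<chi> i g * \<theta> g)))"
    and cU: "card (UNIV :: 'g set) = m * n"
  shows "(\<Sum>i\<in>{1..n}. \<Sum>j\<in>{1..m}. \<chi> i x * \<eta> j x) = (if x = 0 then of_nat (m * n) else 0)"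
proof -
  define C where "C = {\<psi>::'g \<Rightarrow> complex. is_char \<psi>}"
  have b: "bij_betw (\<lambda>(i,j). \<lambda>g. \<chi> i g * \<eta> j g) ({1..n}\<times>{1..m}) C"
    unfolding C_def by (rule char_param[OF \<eta> \<chi> u])
  have fin: "finite C" using bij_betw_finite[OF b] by simp
  have cC: "card C = card (UNIV::'g set)" using bij_betw_same_card[OF b] cU by (simp add: mult.commute)
  have "(\<Sum>i\<in>{1..n}. \<Sum>j\<in>{1..m}. \<chi> i x * \<eta> j x) = (\<Sum>p\<in>{1..n}\<times>{1..m}. ((\<lambda>(i,j). \<lambda>g. \<chi> i g * \<eta> j g) p) x)"
    by (simp add: sum.cartesian_product case_prod_beta)
  also have "\<dots> = (\<Sum>\<psi>\<in>C. \<psi> x)" by (rule sum.reindex_bij_betw[OF b])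
  also have "\<dots> = (if x = 0 then of_nat (card (UNIV::'g set)) else 0)"
    by (rule char_dual_orth[OF fin C_def cC])
  finally show ?thesis using cU by simp
qed


theorem mainTheorem1:
  fixes N D :: "'g::{ab_group_add,finite} set"
    and m n k l1 l2 :: nat
    and \<eta> \<chi> :: "nat \<Rightarrow> 'g \<Rightarrow> complex"
  assumes "add_subgroup N"
    and "card (UNIV :: 'g set) = m * n" and "card N = n"
    and "semiregular_dds m n k l1 l2 N D"
    and "bij_betw \<eta> {1..m} (annihilator N)"
    and "\<forall>i\<in>{1..n}. is_char (\<chi> i)"
    and "\<forall>\<psi>. is_char \<psi> \<longrightarrow>
           (\<exists>!i. i \<in> {1..n} \<and> (\<exists>\<theta>\<in>annihilator N. \<psi> = (\<lambda>g. \<chi> i g * \<theta> g)))"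
  defines "e \<equiv> (\<lambda>i j. evec D (\<chi> i) (\<eta> j))"
    and "W \<equiv> (\<lambda>i. cspan D (\<lambda>j. evec D (\<chi> i) (\<eta> j)) {1..m})"
  shows "(\<forall>i\<in>{1..n}.
            (\<forall>j\<in>{1..m}. e i j \<in> vecspace D \<and> flat D (e i j)) \<and>
            (\<forall>j\<in>{1..m}. \<forall>j'\<in>{1..m}. vinner D (e i j) (e i j') = (if j = j' then 1 else 0)))
       \<and> tight_fusion_frame D W {1..n} (real (n * m) / real k)
       \<and> equichordal D W {1..n}"
proof -
  note N = assms(1) and cU = assms(2) and sr = assms(4) and \<eta>b = assms(5) and \<chi>c = assms(6) and u = assms(7)
  have dds: "divisible_difference_set m n k l1 l2 N D" and kl: "k > l1"
    using sr unfolding semiregular_dds_def by auto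
  have kD: "card D = k" using dds unfolding divisible_difference_set_def by auto
  have k0: "k \<noteq> 0" using kl by simp
  have \<eta>a: "\<And>j. j \<in> {1..m} \<Longrightarrow> \<eta> j \<in> annihilator N" using \<eta>b unfolding bij_betw_def by auto
  have \<eta>c: "\<And>j. j \<in> {1..m} \<Longrightarrow> is_char (\<eta> j)" using \<eta>a annih_char by blast
  have \<eta>t: "\<And>j h. j \<in> {1..m} \<Longrightarrow> h \<in> N \<Longrightarrow> \<eta> j h = 1" using \<eta>a unfolding annihilator_def by auto
  have \<eta>i: "inj_on \<eta> {1..m}" using \<eta>b unfolding bij_betw_def by auto
  have \<chi>c': "\<And>i. i \<in> {1..n} \<Longrightarrow> is_char (\<chi> i)" using \<chi>c by blast
  have We: "\<And>i. W i = cspan D (e i) {1..m}" unfolding W_def e_def by simp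
  have inner: "vinner D (e i j) (e i j') = (if j = j' then 1 else 0)"
    if i: "i \<in> {1..n}" and j: "j \<in> {1..m}" and j': "j' \<in> {1..m}" for i j j'
  proof -
    define \<theta> where "\<theta> = (\<lambda>g. \<eta> j g * cnj (\<eta> j' g))"
    have "vinner D (e i j) (e i j') = (\<Sum>g\<in>D. \<chi> i g * \<eta> j g * cnj (\<chi> i g * \<eta> j' g)) / of_nat (card D)"
      unfolding e_def by (rule evec_inner)
    also have "\<dots> = (\<Sum>g\<in>D. \<theta> g) / of_nat k"
    proof -
      have "\<chi> i g * \<eta> j g * cnj (\<chi> i g * \<eta> j' g) = (\<chi> i g * cnj (\<chi> i g)) * \<theta> g" for g
        unfolding \<theta>_def by (simp add: algebra_simps)
      thus ?thesis using char_unit[OF \<chi>c'[OF i]] kD by simp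
    qed
    also have "\<dots> = (if j = j' then 1 else 0)"
    proof (cases "j = j'")
      case True
      hence "\<And>g. \<theta> g = 1" unfolding \<theta>_def using char_unit[OF \<eta>c[OF j]] by simp
      thus ?thesis using True k0 kD by simp
    next
      case False
      hence "\<eta> j \<noteq> \<eta> j'" using \<eta>i j j' unfolding inj_on_def by blast
      then obtain x where x: "\<theta> x \<noteq> 1" unfolding \<theta>_def using char_eq_iff[OF \<eta>c[OF j] \<eta>c[OF j']] by blast
      have tc: "is_char \<theta>" unfolding \<theta>_def by (intro char_mult char_cnj \<eta>c j j')
      have tt: "\<forall>h\<in>N. \<theta> h = 1" unfolding \<theta>_def using \<eta>t j j' by simp
      show ?thesis using dds_annih_zero[OF sr N tc tt x] False by simp
    qed
    finally show ?thesis .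
  qed
  have vec: "e i j \<in> vecspace D" for i j unfolding e_def evec_def vecspace_def by simp
  have flt: "flat D (e i j)" if "i \<in> {1..n}" "j \<in> {1..m}" for i j
  proof -
    have "cmod (e i j g) = 1 / sqrt (real (card D))" if "g \<in> D" for g
      using that \<chi>c'[OF \<open>i \<in> {1..n}\<close>] \<eta>c[OF \<open>j \<in> {1..m}\<close>]
      unfolding e_def evec_def is_char_def by (simp add: norm_mult norm_divide)
    thus ?thesis unfolding flat_def by simp
  qed
  have ON: "ON D (e i) {1..m}" if "i \<in> {1..n}" for i
    unfolding ON_def using vec inner that by simp
  have part1: "\<forall>i\<in>{1..n}.
            (\<forall>j\<in>{1..m}. e i j \<in> vecspace D \<and> flat D (e i j)) \<and>
            (\<forall>j\<in>{1..m}. \<forall>j'\<in>{1..m}. vinner D (e i j) (e i j') = (if j = j' then 1 else 0))"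
    using vec flt inner by simp
  have part2: "tight_fusion_frame D W {1..n} (real (n * m) / real k)"
    unfolding tight_fusion_frame_def
  proof (intro ballI)
    fix v g assume v: "v \<in> vecspace D" and g: "g \<in> D"
    have "(\<Sum>i\<in>{1..n}. orth_proj D (W i) v g) = (\<Sum>i\<in>{1..n}. \<Sum>j\<in>{1..m}. vinner D v (e i j) * e i j g)"
    proof (rule sum.cong[OF refl])
      fix i assume "i \<in> {1..n}"
      have "orth_proj D (cspan D (e i) {1..m}) v = (\<lambda>x. \<Sum>j\<in>{1..m}. vinner D v (e i j) * e i j x)"
        by (rule proj_eq[OF finite_subset[OF subset_UNIV finite_UNIV] _ ON[OF \<open>i \<in> {1..n}\<close>]]) simp
      thus "orth_proj D (W i) v g = (\<Sum>j\<in>{1..m}. vinner D v (e i j) * e i j g)" by (simp add: We)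
    qed
    also have "\<dots> = (\<Sum>i\<in>{1..n}. \<Sum>j\<in>{1..m}. (\<Sum>h\<in>D. v h * (\<chi> i (g - h) * \<eta> j (g - h))) / of_nat k)"
    proof (intro sum.cong refl)
      fix i j assume i: "i \<in> {1..n}" and j: "j \<in> {1..m}"
      have "vinner D v (e i j) * e i j g = (\<Sum>h\<in>D. v h * cnj (\<chi> i h * \<eta> j h) * (\<chi> i g * \<eta> j g)) / of_nat (card D)"
        unfolding e_def by (rule evec_proj_term[OF g])
      also have "\<dots> = (\<Sum>h\<in>D. v h * (\<chi> i (g - h) * \<eta> j (g - h))) / of_nat k"
        using kD char_minus[OF \<chi>c'[OF i]] char_minus[OF \<eta>c[OF j]] by (simp add: algebra_simps)
      finally show "vinner D v (e i j) * e i j g = (\<Sum>h\<in>D. v h * (\<chi> i (g - h) * \<eta> j (g - h))) / of_nat k" .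
    qed
    also have "\<dots> = (\<Sum>h\<in>D. v h * (\<Sum>i\<in>{1..n}. \<Sum>j\<in>{1..m}. \<chi> i (g - h) * \<eta> j (g - h))) / of_nat k"
      by (simp add: sum_divide_distrib[symmetric] sum_distrib_left sum.swap[of _ D])
    also have "\<dots> = (\<Sum>h\<in>D. if h = g then v h * of_nat (m * n) else 0) / of_nat k"
    proof -
      have "v h * (\<Sum>i\<in>{1..n}. \<Sum>j\<in>{1..m}. \<chi> i (g - h) * \<eta> j (g - h)) = (if h = g then v h * of_nat (m * n) else 0)" for h
        by (subst dual_sum[OF \<eta>b \<chi>c u cU]) auto
      thus ?thesis by simp
    qed
    also have "\<dots> = of_real (real (n * m) / real k) * v g"
      using g by (simp add: mult.commute)
    finally show "(\<Sum>i\<in>{1..n}. orth_proj D (W i) v g) = of_real (real (n * m) / real k) * v g" .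
  qed
  have part3: "equichordal D W {1..n}"
    unfolding equichordal_def
  proof (intro exI ballI impI)
    fix i j assume i: "i \<in> {1..n}" and j: "j \<in> {1..n}" and ij: "i \<noteq> j"
    have trm: "vinner D (e j l) (e i r) * cnj (vinner D (e j l) (e i r)) = (of_nat k - of_nat l1) / (of_nat k * of_nat k)"
      if l: "l \<in> {1..m}" and r: "r \<in> {1..m}" for l r
    proof -
      define \<theta> where "\<theta> = (\<lambda>g. \<chi> j g * \<eta> l g * cnj (\<chi> i g * \<eta> r g))"
      have ev: "vinner D (e j l) (e i r) = (\<Sum>g\<in>D. \<theta> g) / of_nat k"
        unfolding e_def \<theta>_def evec_inner kD ..
      have tc: "is_char \<theta>" unfolding \<theta>_def
        by (intro char_mult char_cnj \<eta>c \<chi>c' i j l r)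
      have "\<exists>h\<in>N. \<theta> h \<noteq> 1"
      proof (rule ccontr)
        assume "\<not> (\<exists>h\<in>N. \<theta> h \<noteq> 1)"
        hence tt: "\<forall>h\<in>N. \<theta> h = 1" by blast
        define \<theta>' where "\<theta>' = (\<lambda>g. \<eta> r g * \<theta> g)"
        have "\<theta>' \<in> annihilator N" unfolding annihilator_def \<theta>'_def
          using tt \<eta>t[OF r] tc \<eta>c[OF r] char_mult by auto
        moreover have "(\<lambda>g. \<chi> j g * \<eta> l g) = (\<lambda>g. \<chi> i g * \<theta>' g)"
        proof
          fix g
          have "\<chi> i g * \<theta>' g = ((\<chi> i g * \<eta> r g) * cnj (\<chi> i g * \<eta> r g)) * (\<chi> j g * \<eta> l g)"
            unfolding \<theta>'_def \<theta>_def by (simp add: algebra_simps)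
          also have "\<dots> = \<chi> j g * \<eta> l g"
            using char_unit[OF char_mult[OF \<chi>c'[OF i] \<eta>c[OF r]]] by simp
          finally show "\<chi> j g * \<eta> l g = \<chi> i g * \<theta>' g" by simp
        qed
        moreover have "is_char (\<lambda>g. \<chi> j g * \<eta> l g)" by (intro char_mult \<eta>c \<chi>c' j l)
        ultimately show False using u i j ij \<eta>a[OF l] by blast
      qed
      then obtain h where h: "h \<in> N" "\<theta> h \<noteq> 1" by blast
      have "(\<Sum>g\<in>D. \<theta> g) * cnj (\<Sum>g\<in>D. \<theta> g) = of_nat k - of_nat l1"
        by (rule dds_nonannih[OF sr N tc h])
      thus ?thesis unfolding ev by (simp add: field_simps)
    qed
    have "op_trace D (orth_proj D (W i) \<circ> orth_proj D (W j)) =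
      (\<Sum>r\<in>{1..m}. \<Sum>l\<in>{1..m}. vinner D (e j l) (e i r) * cnj (vinner D (e j l) (e i r)))"
      unfolding We by (rule trace_formula[OF finite_subset[OF subset_UNIV finite_UNIV] _ _ ON[OF i] ON[OF j]]) simp_all
    also have "\<dots> = (\<Sum>r\<in>{1..m}. \<Sum>l\<in>{1..m}. (of_nat k - of_nat l1) / (of_nat k * of_nat k))"
      using trm by simp
    finally show "op_trace D (orth_proj D (W i) \<circ> orth_proj D (W j)) =
      of_nat m * (of_nat m * ((of_nat k - of_nat l1) / (of_nat k * of_nat k)))" by simp
  qed
  show ?thesis using part1 part2 part3 by blast
qed

end
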